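(* Let $Q$ be a quiver and let $\Pi\in\mathcal{V}^2Q$ be a Poisson structure on $\mathbb{C}Q$ such that $\Pi=\Pi^1+\Pi^2$, where $\Pi^1$ and $\Pi^2$ are homogeneous of different degrees. Then $\Pi^1$ and $\Pi^2$ are compatible Poisson structures on $\mathbb{C}Q$, i.e. $[\Pi^i,\Pi^j]_{\mathcal V}=0$ for $i,j=1,2$.
   Context: A quiver $Q$ has vertex set $I=\{1,\dots,k\}$, arrows $Q$, head/tail maps $h,t$. The path algebra $\mathbb{C}Q$ has basis the paths (including trivial paths $e_i$), multiplied by concatenation written right to left. The double quiver $\bar Q$ has arrows $Q\cup\{a^*\}$ with $h(a^* )=t(a)$, $t(a^* )=h(a)$; $\mathbb{C}\bar Q^r$ is spanned by paths with exactly $r$ starred arrows. $\mathcal{V}Q$ is the quotient of $\mathbb{C}\bar Q$ by the span of $PR-(-1)^{pr}RP$ ($P\in\mathbb{C}\bar Q^p$, $R\in\mathbb{C}\bar Q^r$), graded by $r$. For $w\in\bar Q$, $D_w(x_1\cdots x_n)=\sum_{i:x_i=w}(-1)^{\lambda_i\mu_i}x_{i+1}\cdots x_nx_1\cdots x_{i-1}$, $\lambda_i$ (resp. $\mu_i$) the number of starred arrows among $x_{i+1},\dots,x_n$ (resp. $x_1,\dots,x_i$). For $\gamma\in\mathcal{V}^rQ,\delta\in\mathcal{V}^sQ$: $[\gamma,\delta]_{\mathcal V}=\sum_{a\in Q}\big(D_{a^*}(\gamma)D_a(\delta)-(-1)^{(r-1)(s-1)}D_{a^*}(\delta)D_a(\gamma)\big)$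 modulo the relations. A Poisson structure on $\mathbb{C}Q$ is $\Pi\in\mathcal{V}^2Q$ with $[\Pi,\Pi]_{\mathcal V}=0$. Every element of $\mathcal{V}^2Q$ can be written as $\sum_{a,b\in Q}\sum_{P,R}[Pa^*,Rb^*]$ with $P,R\in\mathbb{C}Q$ paths, where $[u,v]=uv-vu$; such an element is homogeneous of degree $p$ if each nonzero closed path $Pa^*Rb^*$ occurring has length $p+2$. *)

theory Defs
  imports Complex_Main "HOL-Library.Function_Algebras"
begin

text \<open>
Double quiver: arrows Arr a (a in Q) and Star a (the starred arrow a*).
A path of the double quiver is a pair (i, xs): xs = [x1,...,xn] is the word
x1 x2 ... xn (composition right to left, so xn is traversed first), and i is
its head vertex; the trivial path e_i is (i, []).
Elements of the path algebra C(Qbar) are finitely supported functions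
path => complex (coefficient of each basis path).
\<close>

datatype 'a darr = Arr 'a | Star 'a

type_synonym ('v, 'a) qpath = "'v \<times> 'a darr list"
type_synonym ('v, 'a) qelt = "('v, 'a) qpath \<Rightarrow> complex"

fun dh :: "('a \<Rightarrow> 'v) \<Rightarrow> ('a \<Rightarrow> 'v) \<Rightarrow> 'a darr \<Rightarrow> 'v" where
  "dh h t (Arr a) = h a"
| "dh h t (Star a) = t a"

fun dt :: "('a \<Rightarrow> 'v) \<Rightarrow> ('a \<Rightarrow> 'v) \<Rightarrow> 'a darr \<Rightarrow> 'v" where
  "dt h t (Arr a) = t a"
| "dt h t (Star a) = h a"

fun base :: "'a darr \<Rightarrow> 'a" where
  "base (Arr a) = a"
| "base (Star a) = a"

fun isStar :: "'a darr \<Rightarrow> bool" where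
  "isStar (Arr a) = False"
| "isStar (Star a) = True"

definition nstars :: "'a darr list \<Rightarrow> nat" where
  "nstars xs = length (filter isStar xs)"

fun chain :: "('a \<Rightarrow> 'v) \<Rightarrow> ('a \<Rightarrow> 'v) \<Rightarrow> 'a darr list \<Rightarrow> bool" where
  "chain h t [] = True"
| "chain h t [x] = True"
| "chain h t (x # y # xs) = (dt h t x = dh h t y \<and> chain h t (y # xs))"

definition quiver :: "'v set \<Rightarrow> 'a set \<Rightarrow> ('a \<Rightarrow> 'v) \<Rightarrow> ('a \<Rightarrow> 'v) \<Rightarrow> bool" where
  "quiver V A h t \<longleftrightarrow> finite V \<and> (\<forall>a\<in>A. h a \<in> V \<and> t a \<in> V)"

definition valid_path :: "'v set \<Rightarrow> 'a set \<Rightarrow> ('a \<Rightarrow> 'v) \<Rightarrow> ('a \<Rightarrow> 'v)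
    \<Rightarrow> ('v, 'a) qpath \<Rightarrow> bool" where
  "valid_path V A h t p \<longleftrightarrow> fst p \<in> V \<and> (\<forall>x\<in>set (snd p). base x \<in> A)
     \<and> chain h t (snd p) \<and> (snd p \<noteq> [] \<longrightarrow> fst p = dh h t (hd (snd p)))"

definition Q_path :: "'v set \<Rightarrow> 'a set \<Rightarrow> ('a \<Rightarrow> 'v) \<Rightarrow> ('a \<Rightarrow> 'v)
    \<Rightarrow> ('v, 'a) qpath \<Rightarrow> bool" where
  "Q_path V A h t p \<longleftrightarrow> valid_path V A h t p \<and> nstars (snd p) = 0"

definition ptail :: "('a \<Rightarrow> 'v) \<Rightarrow> ('a \<Rightarrow> 'v) \<Rightarrow> ('v, 'a) qpath \<Rightarrow> 'v" where
  "ptail h t p = (if snd p = [] then fst p else dt h t (last (snd p)))"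

definition closed_path :: "('a \<Rightarrow> 'v) \<Rightarrow> ('a \<Rightarrow> 'v) \<Rightarrow> ('v, 'a) qpath \<Rightarrow> bool" where
  "closed_path h t p \<longleftrightarrow> ptail h t p = fst p"

text \<open>product of basis paths P R (R first, then P); None means the product is 0\<close>
definition pmul :: "('a \<Rightarrow> 'v) \<Rightarrow> ('a \<Rightarrow> 'v) \<Rightarrow> ('v, 'a) qpath \<Rightarrow> ('v, 'a) qpath
    \<Rightarrow> ('v, 'a) qpath option" where
  "pmul h t P R = (if ptail h t P = fst R then Some (fst P, snd P @ snd R) else None)"

definition omul :: "('a \<Rightarrow> 'v) \<Rightarrow> ('a \<Rightarrow> 'v) \<Rightarrow> ('v, 'a) qpath option
    \<Rightarrow> ('v, 'a) qpath option \<Rightarrow> ('v, 'a) qpath option" where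
  "omul h t P R = (case (P, R) of (Some P', Some R') \<Rightarrow> pmul h t P' R' | _ \<Rightarrow> None)"

definition single :: "('v, 'a) qpath \<Rightarrow> ('v, 'a) qelt" where
  "single p = (\<lambda>q. if q = p then 1 else 0)"

definition of_popt :: "('v, 'a) qpath option \<Rightarrow> ('v, 'a) qelt" where
  "of_popt P = (case P of None \<Rightarrow> 0 | Some p \<Rightarrow> single p)"

definition scale :: "complex \<Rightarrow> ('v, 'a) qelt \<Rightarrow> ('v, 'a) qelt" where
  "scale c f = (\<lambda>q. c * f q)"

definition supp :: "('v, 'a) qelt \<Rightarrow> ('v, 'a) qpath set" where
  "supp f = {p. f p \<noteq> 0}"

definition emul :: "('a \<Rightarrow> 'v) \<Rightarrow> ('a \<Rightarrow> 'v) \<Rightarrow> ('v, 'a) qelt \<Rightarrow> ('v, 'a) qelt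
    \<Rightarrow> ('v, 'a) qelt" where
  "emul h t f g = (\<Sum>P\<in>supp f. \<Sum>R\<in>supp g. scale (f P * g R) (of_popt (pmul h t P R)))"

definition grel :: "('a \<Rightarrow> 'v) \<Rightarrow> ('a \<Rightarrow> 'v) \<Rightarrow> ('v, 'a) qpath \<Rightarrow> ('v, 'a) qpath
    \<Rightarrow> ('v, 'a) qelt" where
  "grel h t P R = of_popt (pmul h t P R)
     - scale ((-1) ^ (nstars (snd P) * nstars (snd R))) (of_popt (pmul h t R P))"

text \<open>The linear span of the relations; V Q = C(Qbar) / relspan\<close>
inductive_set relspan :: "'v set \<Rightarrow> 'a set \<Rightarrow> ('a \<Rightarrow> 'v) \<Rightarrow> ('a \<Rightarrow> 'v)
    \<Rightarrow> ('v, 'a) qelt set" for V A h t where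
  zero: "0 \<in> relspan V A h t"
| step: "\<lbrakk>valid_path V A h t P; valid_path V A h t R; x \<in> relspan V A h t\<rbrakk>
         \<Longrightarrow> x + scale c (grel h t P R) \<in> relspan V A h t"

definition veq :: "'v set \<Rightarrow> 'a set \<Rightarrow> ('a \<Rightarrow> 'v) \<Rightarrow> ('a \<Rightarrow> 'v)
    \<Rightarrow> ('v, 'a) qelt \<Rightarrow> ('v, 'a) qelt \<Rightarrow> bool" where
  "veq V A h t f g \<longleftrightarrow> f - g \<in> relspan V A h t"

definition in_CQbar :: "'v set \<Rightarrow> 'a set \<Rightarrow> ('a \<Rightarrow> 'v) \<Rightarrow> ('a \<Rightarrow> 'v) \<Rightarrow> nat
    \<Rightarrow> ('v, 'a) qelt \<Rightarrow> bool" where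
  "in_CQbar V A h t r f \<longleftrightarrow> finite (supp f)
     \<and> (\<forall>p\<in>supp f. valid_path V A h t p \<and> nstars (snd p) = r)"

text \<open>D_w on a basis path x_1...x_n (0 on non-closed paths, which vanish in V Q);
  the term for position i = k+1 is (-1)^{lambda_i mu_i} x_{i+1}...x_n x_1...x_{i-1},
  a path with head t(w).\<close>
definition Dpath :: "('a \<Rightarrow> 'v) \<Rightarrow> ('a \<Rightarrow> 'v) \<Rightarrow> 'a darr \<Rightarrow> ('v, 'a) qpath
    \<Rightarrow> ('v, 'a) qelt" where
  "Dpath h t w p = (if \<not> closed_path h t p then 0 else
     (\<Sum>k\<in>{k. k < length (snd p) \<and> snd p ! k = w}.
        scale ((-1) ^ (nstars (drop (Suc k) (snd p)) * nstars (take (Suc k) (snd p))))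
          (single (dt h t w, drop (Suc k) (snd p) @ take k (snd p)))))"

text \<open>the bracket of two basis paths u in V^r, v in V^s (only arrows occurring in u or v
  can contribute to the sum over a in Q)\<close>
definition bracket_basis :: "'a set \<Rightarrow> ('a \<Rightarrow> 'v) \<Rightarrow> ('a \<Rightarrow> 'v)
    \<Rightarrow> ('v, 'a) qpath \<Rightarrow> ('v, 'a) qpath \<Rightarrow> ('v, 'a) qelt" where
  "bracket_basis A h t u v =
     (let r = nstars (snd u); s = nstars (snd v) in
      \<Sum>a\<in>A \<inter> base ` (set (snd u) \<union> set (snd v)).
        emul h t (Dpath h t (Star a) u) (Dpath h t (Arr a) v)
        - scale (if even ((int r - 1) * (int s - 1)) then 1 else -1)
            (emul h t (Dpath h t (Star a) v) (Dpath h t (Arr a) u)))"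

text \<open>the bracket [-,-]_V, extended bilinearly (computed on representatives)\<close>
definition vbracket :: "'a set \<Rightarrow> ('a \<Rightarrow> 'v) \<Rightarrow> ('a \<Rightarrow> 'v)
    \<Rightarrow> ('v, 'a) qelt \<Rightarrow> ('v, 'a) qelt \<Rightarrow> ('v, 'a) qelt" where
  "vbracket A h t f g = (\<Sum>u\<in>supp f. \<Sum>v\<in>supp g. scale (f u * g v) (bracket_basis A h t u v))"

definition poisson :: "'v set \<Rightarrow> 'a set \<Rightarrow> ('a \<Rightarrow> 'v) \<Rightarrow> ('a \<Rightarrow> 'v)
    \<Rightarrow> ('v, 'a) qelt \<Rightarrow> bool" where
  "poisson V A h t \<Pi> \<longleftrightarrow> in_CQbar V A h t 2 \<Pi> \<and> veq V A h t (vbracket A h t \<Pi> \<Pi>) 0"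

definition star_path :: "('a \<Rightarrow> 'v) \<Rightarrow> 'a \<Rightarrow> ('v, 'a) qpath" where
  "star_path t a = (t a, [Star a])"

definition homogeneous :: "'v set \<Rightarrow> 'a set \<Rightarrow> ('a \<Rightarrow> 'v) \<Rightarrow> ('a \<Rightarrow> 'v) \<Rightarrow> nat
    \<Rightarrow> ('v, 'a) qelt \<Rightarrow> bool" where
  "homogeneous V A h t p f \<longleftrightarrow>
    (\<exists>ts :: (complex \<times> ('v, 'a) qpath \<times> 'a \<times> ('v, 'a) qpath \<times> 'a) list.
       (\<forall>(c, P, a, R, b)\<in>set ts. Q_path V A h t P \<and> Q_path V A h t R \<and> a \<in> A \<and> b \<in> A
          \<and> (\<forall>q. omul h t (pmul h t P (star_path t a)) (pmul h t R (star_path t b)) = Some q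
                  \<and> closed_path h t q \<longrightarrow> length (snd q) = p + 2))
     \<and> veq V A h t f
         (\<Sum>(c, P, a, R, b)\<leftarrow>ts.
            scale c (of_popt (omul h t (pmul h t P (star_path t a)) (pmul h t R (star_path t b)))
                   - of_popt (omul h t (pmul h t R (star_path t b)) (pmul h t P (star_path t a))))))"

end

theory Submission imports Defs begin

lemma sum_fapply: "(sum F S) q = (\<Sum>x\<in>S. F x q)"
  by (induction S rule: infinite_finite_induct) auto

lemma sum_list_fapply: "(sum_list (map F xs)) q = (\<Sum>x\<leftarrow>xs. F x q)"
  by (induction xs) auto

lemma scale_apply[simp]: "scale c f q = c * f q" by (simp add: scale_def)

lemma scale_sum: "scale c (sum F S) = (\<Sum>x\<in>S. scale c (F x))"
  by (rule ext) (simp add: sum_fapply sum_distrib_left)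

lemma scale_diff: "scale c (f - g) = scale c f - scale c g"
  by (rule ext) (simp add: algebra_simps)
lemma scale_add: "scale c (f + g) = scale c f + scale c g"
  by (rule ext) (simp add: algebra_simps)
lemma scale_scale: "scale c (scale d f) = scale (c*d) f"
  by (rule ext) simp
lemma scale_one[simp]: "scale 1 f = f" by (rule ext) simp
lemma scale_zero[simp]: "scale c 0 = 0" by (rule ext) simp
lemma scale_zero2[simp]: "scale 0 f = 0" by (rule ext) simp

lemma supp_add: "supp (f + g) \<subseteq> supp f \<union> supp g" by (auto simp: supp_def)
lemma supp_diff: "supp (f - g) \<subseteq> supp f \<union> supp g" by (auto simp: supp_def)
lemma supp_scale: "supp (scale c f) \<subseteq> supp f" by (auto simp: supp_def)
lemma supp_scale_nz: "c \<noteq> 0 \<Longrightarrow> supp (scale c f) = supp f" by (auto simp: supp_def)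
lemma supp_zero[simp]: "supp 0 = {}" by (auto simp: supp_def)
lemma supp_single: "supp (single p) = {p}" by (auto simp: supp_def single_def)
lemma supp_sum: "supp (sum F S) \<subseteq> (\<Union>x\<in>S. supp (F x))"
  by (auto simp: supp_def sum_fapply intro: ccontr dest: sum.neutral)
lemma finite_supp_popt: "finite (supp (of_popt P))"
  by (cases P) (auto simp: of_popt_def supp_single)

definition lext :: "(('v,'a) qpath \<Rightarrow> ('v,'a) qelt) \<Rightarrow> ('v,'a) qelt \<Rightarrow> ('v,'a) qelt" where
  "lext K f = (\<Sum>u\<in>supp f. scale (f u) (K u))"

lemma lext_superset: "finite S \<Longrightarrow> supp f \<subseteq> S \<Longrightarrow> lext K f = (\<Sum>u\<in>S. scale (f u) (K u))"
  unfolding lext_def by (rule sum.mono_neutral_left) (auto simp: supp_def)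

lemma lext_add: "finite (supp f) \<Longrightarrow> finite (supp g) \<Longrightarrow> lext K (f + g) = lext K f + lext K g"
proof -
  assume f: "finite (supp f)" and g: "finite (supp g)"
  let ?S = "supp f \<union> supp g"
  have "lext K (f+g) = (\<Sum>u\<in>?S. scale ((f+g) u) (K u))"
    using f g supp_add by (intro lext_superset) auto
  also have "\<dots> = (\<Sum>u\<in>?S. scale (f u) (K u)) + (\<Sum>u\<in>?S. scale (g u) (K u))"
    by (simp add: sum.distrib[symmetric]) (intro sum.cong refl ext, simp add: algebra_simps)
  also have "\<dots> = lext K f + lext K g"
    using lext_superset[of ?S f K] lext_superset[of ?S g K] f g by auto
  finally show ?thesis .
qed

lemma lext_scale: "lext K (scale c f) = scale c (lext K f)"
proof (cases "c = 0")
  case True then show ?thesis by (simp add: lext_def supp_def)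
next
  case False then show ?thesis
    by (simp add: lext_def supp_scale_nz scale_sum scale_scale)
qed

lemma lext_single: "lext K (single p) = K p"
  by (simp add: lext_def supp_single) (simp add: single_def)

lemma lext_zero[simp]: "lext K 0 = 0" by (simp add: lext_def)

lemma finite_supp_scale: "finite (supp f) \<Longrightarrow> finite (supp (scale c f))"
  using supp_scale finite_subset by blast
lemma finite_supp_add: "finite (supp f) \<Longrightarrow> finite (supp g) \<Longrightarrow> finite (supp (f+g))"
  using supp_add finite_subset by (metis finite_UnI)
lemma finite_supp_diff: "finite (supp f) \<Longrightarrow> finite (supp g) \<Longrightarrow> finite (supp (f-g))"
  using supp_diff finite_subset by (metis finite_UnI)

lemma lext_diff: "finite (supp f) \<Longrightarrow> finite (supp g) \<Longrightarrow> lext K (f - g) = lext K f - lext K g"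
proof -
  assume f: "finite (supp f)" and g: "finite (supp g)"
  have eq: "f - g = f + scale (-1) g" by (rule ext) simp
  have "lext K (f - g) = lext K (f + scale (-1) g)" by (simp only: eq)
  also have "\<dots> = lext K f + scale (-1) (lext K g)"
    using f g lext_add[of f "scale (-1) g" K] finite_supp_scale[OF g] by (simp add: lext_scale)
  also have "\<dots> = lext K f - lext K g" by (rule ext) simp
  finally show ?thesis .
qed

lemma vbracket_lext: "vbracket A h t f g = lext (\<lambda>u. lext (bracket_basis A h t u) g) f"
  unfolding vbracket_def lext_def scale_sum scale_scale by (simp add: mult.commute)


lemma ptail_cat: "ptail h t P = fst R \<Longrightarrow> ptail h t (fst P, snd P @ snd R) = ptail h t R"
  by (cases "snd R = []"; cases "snd P = []") (auto simp: ptail_def)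

lemma lext_popt: "lext K (of_popt P) = (case P of None \<Rightarrow> 0 | Some p \<Rightarrow> K p)"
  by (cases P) (auto simp: of_popt_def lext_single)

definition goodK :: "('a \<Rightarrow> 'v) \<Rightarrow> ('a \<Rightarrow> 'v) \<Rightarrow> (('v,'a) qpath \<Rightarrow> ('v,'a) qelt) \<Rightarrow> bool" where
  "goodK h t K \<longleftrightarrow> (\<forall>u. \<not> closed_path h t u \<longrightarrow> K u = 0) \<and>
     (\<forall>P R. ptail h t P = fst R \<and> ptail h t R = fst P \<longrightarrow>
        K (fst P, snd P @ snd R) = scale ((-1)^(nstars (snd P) * nstars (snd R))) (K (fst R, snd R @ snd P)))"

lemma lext_grel:
  assumes "goodK h t K" shows "lext K (grel h t P R) = 0"
proof -
  let ?s = "((-1::complex) ^ (nstars (snd P) * nstars (snd R)))"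
  have "lext K (grel h t P R) = lext K (of_popt (pmul h t P R)) - scale ?s (lext K (of_popt (pmul h t R P)))"
    unfolding grel_def by (simp add: lext_diff finite_supp_popt finite_supp_scale lext_scale)
  also have "\<dots> = 0"
  proof (cases "ptail h t P = fst R"; cases "ptail h t R = fst P")
    assume a: "ptail h t P = fst R" "ptail h t R = fst P"
    have "K (fst P, snd P @ snd R) = scale ?s (K (fst R, snd R @ snd P))"
      using assms a unfolding goodK_def by blast
    then show ?thesis using a by (simp add: lext_popt pmul_def)
  next
    assume a: "ptail h t P = fst R" "ptail h t R \<noteq> fst P"
    then have "\<not> closed_path h t (fst P, snd P @ snd R)"
      by (simp add: closed_path_def ptail_cat)
    then have "K (fst P, snd P @ snd R) = 0"
      using assms unfolding goodK_def by blast
    then show ?thesis using a by (simp add: lext_popt pmul_def)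
  next
    assume a: "ptail h t P \<noteq> fst R" "ptail h t R = fst P"
    then have "\<not> closed_path h t (fst R, snd R @ snd P)"
      by (simp add: closed_path_def ptail_cat)
    then have "K (fst R, snd R @ snd P) = 0"
      using assms unfolding goodK_def by blast
    then show ?thesis using a by (simp add: lext_popt pmul_def)
  next
    assume a: "ptail h t P \<noteq> fst R" "ptail h t R \<noteq> fst P"
    then show ?thesis by (simp add: lext_popt pmul_def)
  qed
  finally show ?thesis .
qed

lemma finite_supp_grel: "finite (supp (grel h t P R))"
  unfolding grel_def by (intro finite_supp_diff finite_supp_scale finite_supp_popt)

lemma relspan_induct[consumes 1, case_names zero step]:
  assumes "x \<in> relspan V A h t" "Pr 0"
    "\<And>P R x c. valid_path V A h t P \<Longrightarrow> valid_path V A h t R \<Longrightarrow> x \<in> relspan V A h t \<Longrightarrow> Pr x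
      \<Longrightarrow> Pr (x + scale c (grel h t P R))"
  shows "Pr x"
  using assms(1)
proof (induction rule: relspan.induct)
  case zero
  have "(\<lambda>a. 0) = (0::('v,'a) qelt)" by (simp add: zero_fun_def)
  then show ?case using assms(2) by metis
next
  case (step P R x c)
  have "(\<lambda>d. x d + c * grel h t P R d) = x + scale c (grel h t P R)"
    by (simp add: plus_fun_def scale_def)
  then show ?case using assms(3)[OF step(1,2,3,4)] by metis
qed

lemma relspan_finite: fixes x :: "('v,'a) qelt" shows "x \<in> relspan V A h t \<Longrightarrow> finite (supp x)"
proof (erule relspan_induct)
  show "finite (supp 0)" by (simp only: supp_zero finite.emptyI)
next
  fix P R c and y :: "('v,'a) qelt" assume "finite (supp y)"
  then show "finite (supp (y + scale c (grel h t P R)))"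
    by (intro finite_supp_add finite_supp_scale finite_supp_grel)
qed

lemma relspan_lext: "x \<in> relspan V A h t \<Longrightarrow> goodK h t K \<Longrightarrow> lext K x = 0"
proof (erule relspan_induct)
  show "lext K 0 = 0" by simp
next
  fix P R x c assume "x \<in> relspan V A h t" "lext K x = 0" "goodK h t K"
  then show "lext K (x + scale c (grel h t P R)) = 0"
    by (simp add: lext_add relspan_finite finite_supp_scale finite_supp_grel lext_scale lext_grel)
qed

lemma relspan_add: "y \<in> relspan V A h t \<Longrightarrow> x + y \<in> relspan V A h t" if "x \<in> relspan V A h t"
proof (erule relspan_induct)
  show "x + 0 \<in> relspan V A h t" using that by simp
next
  fix P R y c assume "valid_path V A h t P" "valid_path V A h t R" "x + y \<in> relspan V A h t"
  then have "(x + y) + scale c (grel h t P R) \<in> relspan V A h t" by (intro relspan.step)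
  then show "x + (y + scale c (grel h t P R)) \<in> relspan V A h t" by (simp add: add.assoc)
qed

lemma relspan_scale: "x \<in> relspan V A h t \<Longrightarrow> scale d x \<in> relspan V A h t"
proof (erule relspan_induct)
  show "scale d 0 \<in> relspan V A h t" by (simp add: relspan.zero)
next
  fix P R x c assume "valid_path V A h t P" "valid_path V A h t R" "scale d x \<in> relspan V A h t"
  then have "scale d x + scale (d*c) (grel h t P R) \<in> relspan V A h t" by (intro relspan.step)
  then show "scale d (x + scale c (grel h t P R)) \<in> relspan V A h t" by (simp add: scale_add scale_scale)
qed

lemma relspan_diff: "x \<in> relspan V A h t \<Longrightarrow> y \<in> relspan V A h t \<Longrightarrow> x - y \<in> relspan V A h t"
proof -
  assume "x \<in> relspan V A h t" "y \<in> relspan V A h t"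
  then have "x + scale (-1) y \<in> relspan V A h t" by (intro relspan_add relspan_scale)
  moreover have "x + scale (-1) y = x - y" by (rule ext) simp
  ultimately show ?thesis by simp
qed

definition res :: "nat \<Rightarrow> ('v,'a) qelt \<Rightarrow> ('v,'a) qelt" where
  "res l f = (\<lambda>q. if length (snd q) = l then f q else 0)"

lemma res_add: "res l (f + g) = res l f + res l g" by (rule ext) (simp add: res_def)
lemma res_scale: "res l (scale c f) = scale c (res l f)" by (rule ext) (simp add: res_def)

lemma res_grel: "res l (grel h t P R) = (if length (snd P) + length (snd R) = l then grel h t P R else 0)"
  by (rule ext) (auto simp: res_def grel_def of_popt_def pmul_def single_def)

lemma relspan_res: "x \<in> relspan V A h t \<Longrightarrow> res l x \<in> relspan V A h t"
proof (erule relspan_induct)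
  have "res l 0 = 0" by (rule ext) (simp add: res_def)
  then show "res l 0 \<in> relspan V A h t" by (metis relspan.zero)
next
  fix P R x c assume step: "valid_path V A h t P" "valid_path V A h t R" "res l x \<in> relspan V A h t"
  show "res l (x + scale c (grel h t P R)) \<in> relspan V A h t"
  proof (cases "length (snd P) + length (snd R) = l")
    case True
    then show ?thesis using step by (simp add: res_add res_scale res_grel relspan.step)
  next
    case False
    then show ?thesis using step by (simp add: res_add res_scale res_grel)
  qed
qed

lemma nstars_append[simp]: "nstars (xs @ ys) = nstars xs + nstars ys"
  by (simp add: nstars_def)

lemma sign_lemma: "e1 + e2 = e3 + 2 * m \<Longrightarrow> (-1::complex)^e1 = (-1)^e3 * (-1)^e2"
proof -
  assume e: "e1 + e2 = e3 + 2 * m"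
  have "(-1::complex)^e1 * (-1)^e2 = (-1)^(e1+e2)" by (simp add: power_add)
  also have "\<dots> = (-1)^e3 * ((-1)^2)^m" using e by (simp add: power_add power_mult)
  also have "\<dots> = (-1)^e3" by simp
  finally have "(-1::complex)^e1 * (-1)^e2 = (-1)^e3" .
  then have "(-1::complex)^e1 * (-1)^e2 * (-1)^e2 = (-1)^e3 * (-1)^e2" by simp
  moreover have "(-1::complex)^e2 * (-1)^e2 = 1"
    by (metis power_mult_distrib mult_minus1 power_one minus_minus)
  ultimately show ?thesis by (simp add: mult.assoc)
qed

definition rotidx :: "nat \<Rightarrow> nat \<Rightarrow> nat \<Rightarrow> nat" where
  "rotidx m r j = (if j < r then j + m else j - r)"

lemma rot_terms:
  fixes ps rs :: "'a darr list"
  assumes j: "j < length rs + length ps"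
  defines "k \<equiv> rotidx (length ps) (length rs) j"
  shows "k < length (ps @ rs) \<and> (ps @ rs) ! k = (rs @ ps) ! j
     \<and> drop (Suc k) (ps @ rs) @ take k (ps @ rs) = drop (Suc j) (rs @ ps) @ take j (rs @ ps)
     \<and> (-1::complex) ^ (nstars (drop (Suc k) (ps @ rs)) * nstars (take (Suc k) (ps @ rs)))
        = (-1) ^ (nstars ps * nstars rs) *
          (-1) ^ (nstars (drop (Suc j) (rs @ ps)) * nstars (take (Suc j) (rs @ ps)))"
proof (cases "j < length rs")
  case True
  then have k: "k = j + length ps" by (simp add: k_def rotidx_def)
  have d1: "drop (Suc k) (ps @ rs) = drop (Suc j) rs" using k by simp
  have t1: "take k (ps @ rs) = ps @ take j rs" using k by simp
  have t1s: "take (Suc k) (ps @ rs) = ps @ take (Suc j) rs" using k by simp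
  have d2: "drop (Suc j) (rs @ ps) = drop (Suc j) rs @ ps" using True by simp
  have t2: "take j (rs @ ps) = take j rs" using True by simp
  have t2s: "take (Suc j) (rs @ ps) = take (Suc j) rs" using True by simp
  have rs: "nstars rs = nstars (take (Suc j) rs) + nstars (drop (Suc j) rs)"
    by (metis append_take_drop_id nstars_append)
  define a where "a = nstars (take (Suc j) rs)"
  define b where "b = nstars (drop (Suc j) rs)"
  define p where "p = nstars ps"
  have sg: "(-1::complex)^(b * (p + a)) = (-1)^(p * (a + b)) * (-1)^((b + p) * a)"
    by (rule sign_lemma[where m = "a*b"]) (simp add: algebra_simps)
  show ?thesis using True k d1 t1 t1s d2 t2 t2s sg rs
    by (simp add: nth_append a_def b_def p_def)
next
  case False
  then have k: "k = j - length rs" by (simp add: k_def rotidx_def)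
  have kl: "k < length ps" using k j False by simp
  have d1: "drop (Suc k) (ps @ rs) = drop (Suc k) ps @ rs" using kl by simp
  have t1: "take k (ps @ rs) = take k ps" using kl by simp
  have t1s: "take (Suc k) (ps @ rs) = take (Suc k) ps" using kl by simp
  have d2: "drop (Suc j) (rs @ ps) = drop (Suc k) ps" using False k
    by (simp add: Suc_diff_le)
  have t2: "take j (rs @ ps) = rs @ take k ps" using False k by simp
  have t2s: "take (Suc j) (rs @ ps) = rs @ take (Suc k) ps" using False k
    by (simp add: Suc_diff_le)
  have ps: "nstars ps = nstars (take (Suc k) ps) + nstars (drop (Suc k) ps)"
    by (metis append_take_drop_id nstars_append)
  define a where "a = nstars (take (Suc k) ps)"
  define b where "b = nstars (drop (Suc k) ps)"
  define r where "r = nstars rs"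
  have sg: "(-1::complex)^((b + r) * a) = (-1)^((a + b) * r) * (-1)^(b * (r + a))"
    by (rule sign_lemma[where m = "a*b"]) (simp add: algebra_simps)
  have nth: "(ps @ rs) ! k = (rs @ ps) ! j" using False k kl by (simp add: nth_append)
  show ?thesis using kl nth d1 t1 t1s d2 t2 t2s sg ps
    by (simp add: a_def b_def r_def)
qed

lemma rotidx_inv: "j < r + m \<Longrightarrow> rotidx r m (rotidx m r j) = j"
  by (auto simp: rotidx_def)

lemma Dpath_rot:
  fixes ps rs :: "'a darr list"
  assumes cx: "closed_path h t (v1, ps @ rs)" and cy: "closed_path h t (v2, rs @ ps)"
  shows "Dpath h t w (v1, ps @ rs) = scale ((-1) ^ (nstars ps * nstars rs)) (Dpath h t w (v2, rs @ ps))"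
proof -
  let ?s = "(-1::complex) ^ (nstars ps * nstars rs)"
  let ?Kx = "{k. k < length (ps @ rs) \<and> (ps @ rs) ! k = w}"
  let ?Ky = "{k. k < length (rs @ ps) \<and> (rs @ ps) ! k = w}"
  let ?F = "\<lambda>k. scale ((-1) ^ (nstars (drop (Suc k) (ps @ rs)) * nstars (take (Suc k) (ps @ rs))))
          (single (dt h t w, drop (Suc k) (ps @ rs) @ take k (ps @ rs)))"
  let ?G = "\<lambda>k. scale ((-1) ^ (nstars (drop (Suc k) (rs @ ps)) * nstars (take (Suc k) (rs @ ps))))
          (single (dt h t w, drop (Suc k) (rs @ ps) @ take k (rs @ ps)))"
  have "(\<Sum>k\<in>?Ky. scale ?s (?G k)) = (\<Sum>k\<in>?Kx. ?F k)"
  proof (rule sum.reindex_bij_witness[where j = "rotidx (length ps) (length rs)" and i = "rotidx (length rs) (length ps)"])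
    fix a assume "a \<in> ?Ky"
    then have a: "a < length rs + length ps" "(rs @ ps) ! a = w" by auto
    note rt = rot_terms[OF a(1)]
    show "rotidx (length rs) (length ps) (rotidx (length ps) (length rs) a) = a"
      using a rotidx_inv by simp
    show "rotidx (length ps) (length rs) a \<in> ?Kx" using rt a by simp
    show "?F (rotidx (length ps) (length rs) a) = scale ?s (?G a)"
      using rt by (simp add: scale_scale)
  next
    fix b assume "b \<in> ?Kx"
    then have b: "b < length ps + length rs" "(ps @ rs) ! b = w" by auto
    note rt = rot_terms[OF b(1)]
    show "rotidx (length ps) (length rs) (rotidx (length rs) (length ps) b) = b"
      using b rotidx_inv by simp
    show "rotidx (length rs) (length ps) b \<in> ?Ky" using rt b by simp
  qed
  then show ?thesis using cx cy unfolding Dpath_def by (simp add: scale_sum)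
qed

lemma Dpath_good: "goodK h t (Dpath h t w)"
  unfolding goodK_def
proof (intro conjI allI impI)
  fix u assume "\<not> closed_path h t u" then show "Dpath h t w u = 0" by (simp add: Dpath_def)
next
  fix P R assume a: "ptail h t P = fst R \<and> ptail h t R = fst P"
  have cx: "closed_path h t (fst P, snd P @ snd R)"
    using a ptail_cat[of h t P R] by (simp add: closed_path_def)
  have cy: "closed_path h t (fst R, snd R @ snd P)"
    using a ptail_cat[of h t R P] by (simp add: closed_path_def)
  show "Dpath h t w (fst P, snd P @ snd R) =
    scale ((-1) ^ (nstars (snd P) * nstars (snd R))) (Dpath h t w (fst R, snd R @ snd P))"
    by (rule Dpath_rot[OF cx cy])
qed

lemma Dpath_PR: "ptail h t P = fst R \<Longrightarrow> ptail h t R = fst P \<Longrightarrow>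
  Dpath h t w (fst P, snd P @ snd R) = scale ((-1) ^ (nstars (snd P) * nstars (snd R))) (Dpath h t w (fst R, snd R @ snd P))"
  using Dpath_good[of h t w] unfolding goodK_def by blast

lemma Dpath_nc: "\<not> closed_path h t u \<Longrightarrow> Dpath h t w u = 0"
  by (simp add: Dpath_def)

lemma emul_zero1[simp]: "emul h t 0 g = 0" by (simp add: emul_def)
lemma emul_zero2[simp]: "emul h t f 0 = 0" by (simp add: emul_def)

lemma emul_scale1: "emul h t (scale c f) g = scale c (emul h t f g)"
proof (cases "c = 0")
  case True then show ?thesis by (simp add: emul_def supp_def)
next
  case False then show ?thesis
    by (simp add: emul_def supp_scale_nz scale_sum scale_scale mult.assoc)
qed

lemma emul_scale2: "emul h t f (scale c g) = scale c (emul h t f g)"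
proof (cases "c = 0")
  case True then show ?thesis by (simp add: emul_def supp_def)
next
  case False then show ?thesis
    by (simp add: emul_def supp_scale_nz scale_sum scale_scale mult.assoc mult.left_commute)
qed

lemma scale_comm: "scale c (scale d f) = scale d (scale c f)"
  by (simp add: scale_scale mult.commute)

lemma bb_nc1: "\<not> closed_path h t u \<Longrightarrow> bracket_basis A h t u v = 0"
  by (simp add: bracket_basis_def Dpath_nc Let_def)
lemma bb_nc2: "\<not> closed_path h t v \<Longrightarrow> bracket_basis A h t u v = 0"
  by (simp add: bracket_basis_def Dpath_nc Let_def)

lemma bb_good1: "goodK h t (\<lambda>u. bracket_basis A h t u v)"
  unfolding goodK_def
proof (intro conjI allI impI)
  fix u assume "\<not> closed_path h t u" then show "bracket_basis A h t u v = 0" by (rule bb_nc1)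
next
  fix P R assume a: "ptail h t P = fst R \<and> ptail h t R = fst P"
  let ?s = "(-1::complex) ^ (nstars (snd P) * nstars (snd R))"
  have D: "\<And>w. Dpath h t w (fst P, snd P @ snd R) = scale ?s (Dpath h t w (fst R, snd R @ snd P))"
    using a by (intro Dpath_PR) auto
  have st: "set (snd P @ snd R) = set (snd R @ snd P)" by auto
  have ns: "nstars (snd P @ snd R) = nstars (snd R @ snd P)" by simp
  show "bracket_basis A h t (fst P, snd P @ snd R) v = scale ?s (bracket_basis A h t (fst R, snd R @ snd P) v)"
    unfolding bracket_basis_def Let_def snd_conv st ns D
    by (simp add: scale_sum scale_diff emul_scale1 emul_scale2 scale_comm[of ?s])
qed

lemma bb_good2: "goodK h t (\<lambda>v. bracket_basis A h t u v)"
  unfolding goodK_def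
proof (intro conjI allI impI)
  fix v assume "\<not> closed_path h t v" then show "bracket_basis A h t u v = 0" by (rule bb_nc2)
next
  fix P R assume a: "ptail h t P = fst R \<and> ptail h t R = fst P"
  let ?s = "(-1::complex) ^ (nstars (snd P) * nstars (snd R))"
  have D: "\<And>w. Dpath h t w (fst P, snd P @ snd R) = scale ?s (Dpath h t w (fst R, snd R @ snd P))"
    using a by (intro Dpath_PR) auto
  have st: "set (snd P @ snd R) = set (snd R @ snd P)" by auto
  have ns: "nstars (snd P @ snd R) = nstars (snd R @ snd P)" by simp
  show "bracket_basis A h t u (fst P, snd P @ snd R) = scale ?s (bracket_basis A h t u (fst R, snd R @ snd P))"
    unfolding bracket_basis_def Let_def snd_conv st ns D
    by (simp add: scale_sum scale_diff emul_scale1 emul_scale2 scale_comm[of ?s])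
qed

lemma goodK_lext_outer:
  assumes "\<And>v. goodK h t (\<lambda>u. B u v)"
  shows "goodK h t (\<lambda>u. lext (\<lambda>v. B u v) g)"
  unfolding goodK_def
proof (intro conjI allI impI)
  fix u assume "\<not> closed_path h t u"
  then have "\<And>v. B u v = 0" using assms unfolding goodK_def by blast
  then show "lext (\<lambda>v. B u v) g = 0" by (simp add: lext_def)
next
  fix P R assume a: "ptail h t P = fst R \<and> ptail h t R = fst P"
  let ?s = "(-1::complex) ^ (nstars (snd P) * nstars (snd R))"
  have "\<And>v. B (fst P, snd P @ snd R) v = scale ?s (B (fst R, snd R @ snd P) v)"
    using assms a unfolding goodK_def by blast
  then show "lext (\<lambda>v. B (fst P, snd P @ snd R) v) g = scale ?s (lext (\<lambda>v. B (fst R, snd R @ snd P) v) g)"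
    by (simp add: lext_def scale_sum scale_comm[of ?s])
qed

lemma lext_K0: "(\<And>u. K u = 0) \<Longrightarrow> lext K f = 0" by (simp add: lext_def)

lemma lext_Kadd: "lext (\<lambda>u. K1 u + K2 u) f = lext K1 f + lext K2 f"
  by (simp add: lext_def scale_add sum.distrib)

lemma vb_rel1: "d \<in> relspan V A h t \<Longrightarrow> vbracket A h t d g = 0"
  unfolding vbracket_lext
  by (rule relspan_lext) (auto intro: goodK_lext_outer bb_good1)

lemma vb_rel2: "d \<in> relspan V A h t \<Longrightarrow> vbracket A h t f d = 0"
  unfolding vbracket_lext
  by (rule lext_K0) (rule relspan_lext, assumption, rule bb_good2)

lemma vb_add1: "finite (supp f1) \<Longrightarrow> finite (supp f2) \<Longrightarrow>
  vbracket A h t (f1 + f2) g = vbracket A h t f1 g + vbracket A h t f2 g"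
  unfolding vbracket_lext by (rule lext_add)

lemma vb_add2: "finite (supp g1) \<Longrightarrow> finite (supp g2) \<Longrightarrow>
  vbracket A h t f (g1 + g2) = vbracket A h t f g1 + vbracket A h t f g2"
  unfolding vbracket_lext by (simp add: lext_add lext_Kadd)

lemma vb_wd:
  assumes "finite (supp f)" "finite (supp f')" "finite (supp g)" "finite (supp g')"
    "f - f' \<in> relspan V A h t" "g - g' \<in> relspan V A h t"
  shows "vbracket A h t f g = vbracket A h t f' g'"
proof -
  have f: "f = f' + (f - f')" by simp
  have g: "g = g' + (g - g')" by simp
  have ff: "finite (supp (f - f'))" "finite (supp (g - g'))" using assms by (auto intro: finite_supp_diff)
  have "vbracket A h t f g = vbracket A h t f' g + vbracket A h t (f - f') g"
    by (subst f, rule vb_add1) (use assms ff in auto)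
  also have "\<dots> = vbracket A h t f' g" using vb_rel1[OF assms(5)] by simp
  also have "\<dots> = vbracket A h t f' g' + vbracket A h t f' (g - g')"
    by (subst g, rule vb_add2) (use assms ff in auto)
  also have "\<dots> = vbracket A h t f' g'" using vb_rel2[OF assms(6)] by simp
  finally show ?thesis .
qed

definition lensupp :: "nat \<Rightarrow> ('v,'a) qelt \<Rightarrow> bool" where
  "lensupp L f \<longleftrightarrow> (\<forall>q. f q \<noteq> 0 \<longrightarrow> length (snd q) = L)"

lemma lensupp_0[simp]: "lensupp L 0" by (simp add: lensupp_def)
lemma lensupp_sum: "(\<And>x. x \<in> S \<Longrightarrow> lensupp L (F x)) \<Longrightarrow> lensupp L (sum F S)"
  unfolding lensupp_def sum_fapply
  by (metis (mono_tags, lifting) sum.neutral)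
lemma lensupp_scale: "lensupp L f \<Longrightarrow> lensupp L (scale c f)"
  by (auto simp: lensupp_def)
lemma lensupp_diff: "lensupp L f \<Longrightarrow> lensupp L g \<Longrightarrow> lensupp L (f - g)"
  unfolding lensupp_def
proof (intro allI impI)
  fix q assume "\<forall>q. f q \<noteq> 0 \<longrightarrow> length (snd q) = L" "\<forall>q. g q \<noteq> 0 \<longrightarrow> length (snd q) = L" "(f - g) q \<noteq> 0"
  then show "length (snd q) = L" by (metis diff_self minus_apply)
qed
lemma lensupp_add: "lensupp L f \<Longrightarrow> lensupp L g \<Longrightarrow> lensupp L (f + g)"
  unfolding lensupp_def
proof (intro allI impI)
  fix q assume "\<forall>q. f q \<noteq> 0 \<longrightarrow> length (snd q) = L" "\<forall>q. g q \<noteq> 0 \<longrightarrow> length (snd q) = L" "(f + g) q \<noteq> 0"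
  then show "length (snd q) = L" by (metis add.right_neutral plus_fun_apply)
qed

lemma lensupp_single: "length (snd p) = L \<Longrightarrow> lensupp L (single p)"
  by (auto simp: lensupp_def single_def)

lemma Dpath_len: "lensupp (length (snd u) - 1) (Dpath h t w u)"
  unfolding Dpath_def
  by (auto intro!: lensupp_sum lensupp_scale lensupp_single)

lemma emul_len: "lensupp l1 f \<Longrightarrow> lensupp l2 g \<Longrightarrow> lensupp (l1 + l2) (emul h t f g)"
  unfolding emul_def
  apply (intro lensupp_sum lensupp_scale)
  apply (auto simp: lensupp_def supp_def pmul_def of_popt_def single_def)
  done

lemma bb_len: "lensupp (length (snd u) - 1 + (length (snd v) - 1)) (bracket_basis A h t u v)"
proof -
  have "lensupp (length (snd v) - 1 + (length (snd u) - 1)) (emul h t (Dpath h t w v) (Dpath h t w' u))"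
    for w w' by (intro emul_len Dpath_len)
  then have X: "lensupp (length (snd u) - 1 + (length (snd v) - 1)) (emul h t (Dpath h t w v) (Dpath h t w' u))"
    for w w' by (simp add: add.commute)
  show ?thesis unfolding bracket_basis_def Let_def
    by (intro lensupp_sum lensupp_diff lensupp_scale emul_len Dpath_len X)
qed

definition lenok :: "('a \<Rightarrow> 'v) \<Rightarrow> ('a \<Rightarrow> 'v) \<Rightarrow> nat \<Rightarrow> ('v,'a) qelt \<Rightarrow> bool" where
  "lenok h t L f \<longleftrightarrow> (\<forall>q. f q \<noteq> 0 \<longrightarrow> closed_path h t q \<longrightarrow> length (snd q) = L)"

lemma vb_len:
  assumes "lenok h t l1 f" "lenok h t l2 g"
  shows "lensupp (l1 - 1 + (l2 - 1)) (vbracket A h t f g)"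
  unfolding vbracket_def
proof (intro lensupp_sum lensupp_scale)
  fix u v assume u: "u \<in> supp f" and v: "v \<in> supp g"
  show "lensupp (l1 - 1 + (l2 - 1)) (bracket_basis A h t u v)"
  proof (cases "closed_path h t u \<and> closed_path h t v")
    case True
    then have "length (snd u) = l1" "length (snd v) = l2" using assms u v
      unfolding lenok_def supp_def by blast+
    then show ?thesis using bb_len[of u v A h t] by simp
  next
    case False then show ?thesis using bb_nc1 bb_nc2 by (metis lensupp_0)
  qed
qed

lemma lenok_0[simp]: "lenok h t L 0" by (simp add: lenok_def)
lemma lenok_add: "lenok h t L f \<Longrightarrow> lenok h t L g \<Longrightarrow> lenok h t L (f + g)"
  unfolding lenok_def
proof (intro allI impI)
  fix q assume "\<forall>q. f q \<noteq> 0 \<longrightarrow> closed_path h t q \<longrightarrow> length (snd q) = L"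
    "\<forall>q. g q \<noteq> 0 \<longrightarrow> closed_path h t q \<longrightarrow> length (snd q) = L" "(f + g) q \<noteq> 0" "closed_path h t q"
  then show "length (snd q) = L" by (metis add.right_neutral plus_fun_apply)
qed
lemma lenok_diff: "lenok h t L f \<Longrightarrow> lenok h t L g \<Longrightarrow> lenok h t L (f - g)"
  unfolding lenok_def
proof (intro allI impI)
  fix q assume "\<forall>q. f q \<noteq> 0 \<longrightarrow> closed_path h t q \<longrightarrow> length (snd q) = L"
    "\<forall>q. g q \<noteq> 0 \<longrightarrow> closed_path h t q \<longrightarrow> length (snd q) = L" "(f - g) q \<noteq> 0" "closed_path h t q"
  then show "length (snd q) = L" by (metis diff_self minus_apply)
qed
lemma lenok_scale: "lenok h t L f \<Longrightarrow> lenok h t L (scale c f)"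
  by (auto simp: lenok_def)
lemma lenok_popt: "(\<And>q. X = Some q \<Longrightarrow> closed_path h t q \<Longrightarrow> length (snd q) = L) \<Longrightarrow> lenok h t L (of_popt X)"
  by (cases X) (auto simp: lenok_def of_popt_def single_def)

lemma lenok_sum_list: "(\<And>x. x \<in> set xs \<Longrightarrow> lenok h t L (F x)) \<Longrightarrow> lenok h t L (sum_list (map F xs))"
  by (induction xs) (auto intro: lenok_add)

lemma finite_sum_list: "(\<And>x. x \<in> set xs \<Longrightarrow> finite (supp (F x))) \<Longrightarrow> finite (supp (sum_list (map F xs)))"
  by (induction xs) (auto intro: finite_supp_add)

lemma omul_swap:
  assumes "omul h t B C = Some q" "closed_path h t q"
  shows "\<exists>q'. omul h t C B = Some q' \<and> closed_path h t q' \<and> length (snd q') = length (snd q)"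
proof -
  obtain b c where bc: "B = Some b" "C = Some c" "pmul h t b c = Some q"
    using assms(1) by (auto simp: omul_def split: option.splits)
  then have t1: "ptail h t b = fst c" and q: "q = (fst b, snd b @ snd c)"
    by (auto simp: pmul_def split: if_splits)
  have "ptail h t q = ptail h t c" using ptail_cat[OF t1] q by simp
  then have t2: "ptail h t c = fst b" using assms(2) q by (simp add: closed_path_def)
  have "ptail h t (fst c, snd c @ snd b) = ptail h t b" using ptail_cat[OF t2] by simp
  then show ?thesis using bc t1 t2 q
    by (auto simp: omul_def pmul_def closed_path_def)
qed

lemma homog_rep:
  fixes V :: "'v set" and A :: "'a set" and h t :: "'a \<Rightarrow> 'v" and f :: "('v,'a) qelt"
  assumes "homogeneous V A h t p f"
  shows "\<exists>E. finite (supp E) \<and> lenok h t (p + 2) E \<and> f - E \<in> relspan V A h t"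
proof -
  obtain ts :: "(complex \<times> ('v, 'a) qpath \<times> 'a \<times> ('v, 'a) qpath \<times> 'a) list" where
    ts: "\<forall>(c, P, a, R, b)\<in>set ts. Q_path V A h t P \<and> Q_path V A h t R \<and> a \<in> A \<and> b \<in> A
          \<and> (\<forall>q. omul h t (pmul h t P (star_path t a)) (pmul h t R (star_path t b)) = Some q
                  \<and> closed_path h t q \<longrightarrow> length (snd q) = p + 2)"
    and v: "veq V A h t f
         (\<Sum>(c, P, a, R, b)\<leftarrow>ts.
            scale c (of_popt (omul h t (pmul h t P (star_path t a)) (pmul h t R (star_path t b)))
                   - of_popt (omul h t (pmul h t R (star_path t b)) (pmul h t P (star_path t a)))))"
    using assms unfolding homogeneous_def by blast
  let ?F = "\<lambda>(c, P, a, R, b).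
            scale c (of_popt (omul h t (pmul h t P (star_path t a)) (pmul h t R (star_path t b)))
                   - of_popt (omul h t (pmul h t R (star_path t b)) (pmul h t P (star_path t a))))"
  have "finite (supp (sum_list (map ?F ts)))"
    by (rule finite_sum_list) (auto intro!: finite_supp_scale finite_supp_diff finite_supp_popt)
  moreover have "lenok h t (p + 2) (sum_list (map ?F ts))"
  proof (rule lenok_sum_list)
    fix x assume x: "x \<in> set ts"
    obtain c P a R b where xe: "x = (c, P, a, R, b)" by (cases x) auto
    let ?X = "omul h t (pmul h t P (star_path t a)) (pmul h t R (star_path t b))"
    let ?Y = "omul h t (pmul h t R (star_path t b)) (pmul h t P (star_path t a))"
    have hx: "\<And>q. ?X = Some q \<Longrightarrow> closed_path h t q \<Longrightarrow> length (snd q) = p + 2"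
      using ts x xe by fastforce
    have hy: "\<And>q. ?Y = Some q \<Longrightarrow> closed_path h t q \<Longrightarrow> length (snd q) = p + 2"
      using omul_swap hx by metis
    show "lenok h t (p + 2) (?F x)" unfolding xe
      using hx hy by (auto intro!: lenok_scale lenok_diff lenok_popt)
  qed
  moreover have "f - sum_list (map ?F ts) \<in> relspan V A h t" using v by (simp add: veq_def)
  ultimately show ?thesis by blast
qed

lemma scale_m1: "scale (-1) f = - f" by (rule ext) simp

lemma bb_sym: "nstars (snd u) = 2 \<Longrightarrow> nstars (snd v) = 2 \<Longrightarrow> bracket_basis A h t v u = bracket_basis A h t u v"
  unfolding bracket_basis_def Let_def by (simp add: scale_m1 Un_commute add.commute)

lemma vb_sym:
  assumes "\<And>u. u \<in> supp f \<Longrightarrow> nstars (snd u) = 2" "\<And>v. v \<in> supp g \<Longrightarrow> nstars (snd v) = 2"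
  shows "vbracket A h t g f = vbracket A h t f g"
  unfolding vbracket_def
  apply (subst sum.swap)
  apply (intro sum.cong refl)
  using assms bb_sym by (metis mult.commute)

lemma res_self: "lensupp L f \<Longrightarrow> res L f = f"
proof (rule ext)
  fix q assume "lensupp L f"
  then have "f q \<noteq> 0 \<longrightarrow> length (snd q) = L" unfolding lensupp_def by blast
  then show "res L f q = f q" unfolding res_def by auto
qed
lemma res_other: "lensupp L' f \<Longrightarrow> L' \<noteq> L \<Longrightarrow> res L f = 0"
proof (rule ext)
  fix q assume "lensupp L' f" "L' \<noteq> L"
  then have "f q \<noteq> 0 \<longrightarrow> length (snd q) = L'" unfolding lensupp_def by blast
  then show "res L f q = 0 q" using \<open>L' \<noteq> L\<close> unfolding res_def by auto
qed

lemma relspan_half: "x + x \<in> relspan V A h t \<Longrightarrow> x \<in> relspan V A h t"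
proof -
  assume "x + x \<in> relspan V A h t"
  then have "scale (1/2) (x + x) \<in> relspan V A h t" by (rule relspan_scale)
  moreover have "scale (1/2) (x + x) = x" by (rule ext) simp
  ultimately show ?thesis by simp
qed

theorem mainTheorem4:
  fixes V :: "'v set" and A :: "'a set" and h t :: "'a \<Rightarrow> 'v"
    and \<Pi> \<Pi>1 \<Pi>2 :: "('v, 'a) qelt" and p1 p2 :: nat
  assumes "quiver V A h t"
    and "poisson V A h t \<Pi>"
    and "in_CQbar V A h t 2 \<Pi>1" and "in_CQbar V A h t 2 \<Pi>2"
    and "veq V A h t \<Pi> (\<Pi>1 + \<Pi>2)"
    and "homogeneous V A h t p1 \<Pi>1" and "homogeneous V A h t p2 \<Pi>2"
    and "p1 \<noteq> p2"
  shows "veq V A h t (vbracket A h t \<Pi>1 \<Pi>1) 0 \<and> veq V A h t (vbracket A h t \<Pi>1 \<Pi>2) 0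
       \<and> veq V A h t (vbracket A h t \<Pi>2 \<Pi>1) 0 \<and> veq V A h t (vbracket A h t \<Pi>2 \<Pi>2) 0"
proof -
  obtain E1 where E1: "finite (supp E1)" "lenok h t (p1 + 2) E1" "\<Pi>1 - E1 \<in> relspan V A h t"
    using homog_rep[OF assms(6)] by blast
  obtain E2 where E2: "finite (supp E2)" "lenok h t (p2 + 2) E2" "\<Pi>2 - E2 \<in> relspan V A h t"
    using homog_rep[OF assms(7)] by blast
  have fP: "finite (supp \<Pi>)" using assms(2) by (simp add: poisson_def in_CQbar_def)
  have f1: "finite (supp \<Pi>1)" and s1: "\<And>u. u \<in> supp \<Pi>1 \<Longrightarrow> nstars (snd u) = 2"
    using assms(3) by (auto simp: in_CQbar_def)
  have f2: "finite (supp \<Pi>2)" and s2: "\<And>u. u \<in> supp \<Pi>2 \<Longrightarrow> nstars (snd u) = 2"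
    using assms(4) by (auto simp: in_CQbar_def)
  have f12: "finite (supp (\<Pi>1 + \<Pi>2))" using f1 f2 by (rule finite_supp_add)
  define B11 where "B11 = vbracket A h t \<Pi>1 \<Pi>1"
  define B12 where "B12 = vbracket A h t \<Pi>1 \<Pi>2"
  define B21 where "B21 = vbracket A h t \<Pi>2 \<Pi>1"
  define B22 where "B22 = vbracket A h t \<Pi>2 \<Pi>2"
  have L11: "lensupp (2 * p1 + 2) B11"
  proof -
    have "B11 = vbracket A h t E1 E1" unfolding B11_def by (rule vb_wd) (use f1 E1 in auto)
    then show ?thesis using vb_len[OF E1(2) E1(2), of A] by (simp add: mult_2)
  qed
  have L12: "lensupp (p1 + p2 + 2) B12"
  proof -
    have "B12 = vbracket A h t E1 E2" unfolding B12_def by (rule vb_wd) (use f1 f2 E1 E2 in auto)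
    then show ?thesis using vb_len[OF E1(2) E2(2), of A] by simp
  qed
  have L22: "lensupp (2 * p2 + 2) B22"
  proof -
    have "B22 = vbracket A h t E2 E2" unfolding B22_def by (rule vb_wd) (use f2 E2 in auto)
    then show ?thesis using vb_len[OF E2(2) E2(2), of A] by (simp add: mult_2)
  qed
  have sym: "B21 = B12" unfolding B21_def B12_def by (rule vb_sym) (use s1 s2 in auto)
  have rel: "vbracket A h t \<Pi> \<Pi> \<in> relspan V A h t" using assms(2)
    by (simp add: poisson_def veq_def)
  have "vbracket A h t \<Pi> \<Pi> = vbracket A h t (\<Pi>1 + \<Pi>2) (\<Pi>1 + \<Pi>2)"
    by (rule vb_wd) (use fP f12 assms(5) in \<open>auto simp: veq_def\<close>)
  also have "\<dots> = B11 + B12 + (B21 + B22)"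
    unfolding B11_def B12_def B21_def B22_def using f1 f2 f12
    by (simp add: vb_add1 vb_add2)
  finally have S: "B11 + B12 + (B21 + B22) \<in> relspan V A h t" using rel by simp
  have RA: "\<And>L. res L (B11 + B12 + (B21 + B22)) = res L B11 + res L B12 + (res L B21 + res L B22)"
    by (simp only: res_add)
  have ne1: "p1 + p2 + 2 \<noteq> 2 * p1 + 2" "2 * p2 + 2 \<noteq> 2 * p1 + 2" "2 * p1 + 2 \<noteq> 2 * p2 + 2"
     "p1 + p2 + 2 \<noteq> 2 * p2 + 2" "2 * p1 + 2 \<noteq> p1 + p2 + 2" "2 * p2 + 2 \<noteq> p1 + p2 + 2"
    using assms(8) by auto
  have L21: "lensupp (p1 + p2 + 2) B21" using L12 sym by simp
  have r1: "res (2 * p1 + 2) (B11 + B12 + (B21 + B22)) = B11"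
    unfolding RA using res_self[OF L11] res_other[OF L12 ne1(1)] res_other[OF L21 ne1(1)]
      res_other[OF L22 ne1(2)] by simp
  have r2: "res (2 * p2 + 2) (B11 + B12 + (B21 + B22)) = B22"
    unfolding RA using res_self[OF L22] res_other[OF L12 ne1(4)] res_other[OF L21 ne1(4)]
      res_other[OF L11 ne1(3)] by simp
  have r3: "res (p1 + p2 + 2) (B11 + B12 + (B21 + B22)) = B12 + B12"
    unfolding RA using res_self[OF L12] res_self[OF L21] res_other[OF L11 ne1(5)]
      res_other[OF L22 ne1(6)] sym by simp
  have "B11 \<in> relspan V A h t" using relspan_res[OF S, of "2 * p1 + 2"] r1 by simp
  moreover have "B22 \<in> relspan V A h t" using relspan_res[OF S, of "2 * p2 + 2"] r2 by simp
  moreover have "B12 \<in> relspan V A h t" using relspan_res[OF S, of "p1 + p2 + 2"] r3 relspan_half by metis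
  ultimately show ?thesis using sym unfolding B11_def B12_def B21_def B22_def veq_def by simp
qed

end
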